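(* Let $\phi$ be an IPC formula disjunctive in the variable $x$ and let $n$ be the cardinality of $\mathrm{Head}(\phi)$. Then for every Heyting algebra $H$ and valuation $v$ of the variables other than $x$, the map $F(h)=[\![\phi]\!]_{(v,h/x)}$ satisfies $\mu.F=F^{n+1}(\bot)$.
   Context: A formula is disjunctive in $x$ if it is generated by the grammar $\phi ::= x \mid \alpha\to\phi \mid \beta\vee\phi \mid \phi\vee\phi$, where $\alpha,\beta$ range over IPC formulas not containing $x$ (disjunctions up to commutativity). $\mathrm{Head}(\phi)$ is the set of formulas $\alpha$ used in productions $\alpha\to\phi'$ in the parse of $\phi$. $\mu.F$ is the least fixed point of $F$. *)

theory Defs
  imports Main
begin

class heyting_algebra = bounded_lattice +
  fixes himp :: "'a \<Rightarrow> 'a \<Rightarrow> 'a" (infixr "\<leadsto>" 60)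
  assumes himp_residuation: "inf a b \<le> c \<longleftrightarrow> a \<le> (b \<leadsto> c)"

datatype 'v form =
    Var 'v
  | Bot
  | Top
  | Conj "'v form" "'v form"
  | Disj "'v form" "'v form"
  | Imp "'v form" "'v form"

fun vars :: "'v form \<Rightarrow> 'v set" where
  "vars (Var y) = {y}"
| "vars Bot = {}"
| "vars Top = {}"
| "vars (Conj a b) = vars a \<union> vars b"
| "vars (Disj a b) = vars a \<union> vars b"
| "vars (Imp a b) = vars a \<union> vars b"

fun eval :: "('v \<Rightarrow> 'a::heyting_algebra) \<Rightarrow> 'v form \<Rightarrow> 'a" where
  "eval v (Var y) = v y"
| "eval v Bot = bot"
| "eval v Top = top"
| "eval v (Conj a b) = inf (eval v a) (eval v b)"
| "eval v (Disj a b) = sup (eval v a) (eval v b)"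
| "eval v (Imp a b) = (eval v a \<leadsto> eval v b)"

text \<open>Grammar: phi ::= x | alpha -> phi | beta \/ phi | phi \/ phi, with alpha, beta
  not containing x; disjunctions taken up to commutativity.\<close>

inductive disjunctive :: "'v \<Rightarrow> 'v form \<Rightarrow> bool" for x where
  dvar: "disjunctive x (Var x)"
| dimp: "x \<notin> vars a \<Longrightarrow> disjunctive x p \<Longrightarrow> disjunctive x (Imp a p)"
| dorl: "x \<notin> vars b \<Longrightarrow> disjunctive x p \<Longrightarrow> disjunctive x (Disj b p)"
| dorr: "x \<notin> vars b \<Longrightarrow> disjunctive x p \<Longrightarrow> disjunctive x (Disj p b)"
| dor:  "disjunctive x p \<Longrightarrow> disjunctive x q \<Longrightarrow> disjunctive x (Disj p q)"

text \<open>A disjunct not containing x is a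
  side formula beta and contributes nothing.\<close>

fun head :: "'v \<Rightarrow> 'v form \<Rightarrow> 'v form set" where
  "head x (Imp a p) = insert a (head x p)"
| "head x (Disj p q) =
     (if x \<notin> vars p then head x q
      else if x \<notin> vars q then head x p
      else head x p \<union> head x q)"
| "head x _ = {}"

definition is_least_fixpoint :: "('a::order \<Rightarrow> 'a) \<Rightarrow> 'a \<Rightarrow> bool" where
  "is_least_fixpoint F a \<longleftrightarrow> F a = a \<and> (\<forall>b. F b = b \<longrightarrow> a \<le> b)"

end

theory Submission
  imports Defs
begin

lemma h_mp: "inf (a \<leadsto> b) a \<le> (b::'a::heyting_algebra)"
  using himp_residuation[of "a \<leadsto> b" a b] by simp

lemma h_infl: "(b::'a::heyting_algebra) \<le> a \<leadsto> b"
  using himp_residuation[of b a b] by simp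

lemma h_mono: "(b::'a::heyting_algebra) \<le> c \<Longrightarrow> (a \<leadsto> b) \<le> (a \<leadsto> c)"
  using himp_residuation[of "a \<leadsto> b" a c] h_mp[of a b] by (meson order_trans)

lemma h_distrib: "inf (c::'a::heyting_algebra) (sup a b) \<le> sup (inf c a) (inf c b)"
proof -
  let ?R = "sup (inf c a) (inf c b)"
  have "a \<le> c \<leadsto> ?R" using himp_residuation[of a c ?R]
    by (simp add: inf_commute le_supI1)
  moreover have "b \<le> c \<leadsto> ?R" using himp_residuation[of b c ?R]
    by (simp add: inf_commute le_supI2)
  ultimately have "sup a b \<le> c \<leadsto> ?R" by simp
  then have "inf (sup a b) c \<le> ?R" using himp_residuation by blast
  then show ?thesis by (simp add: inf_commute)
qed

definition upd :: "('v \<Rightarrow> 'a) \<Rightarrow> 'v \<Rightarrow> 'a \<Rightarrow> 'v \<Rightarrow> 'a" where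
  "upd v x h = v(x := h)"

lemma eval_upd_var[simp]: "upd v x h x = h"
  by (simp add: upd_def)

lemma eval_free: "x \<notin> vars a \<Longrightarrow> eval (upd v x (h)) a = eval v a"
  unfolding upd_def by (induction a) auto

lemma disj_var: "disjunctive x p \<Longrightarrow> x \<in> vars p"
  by (induction rule: disjunctive.induct) auto

lemma head_finite: "finite (head x p)"
  by (induction x p rule: head.induct) auto

lemma disj_mono:
  fixes v :: "'v \<Rightarrow> 'a::heyting_algebra"
  shows "disjunctive x p \<Longrightarrow> h \<le> h' \<Longrightarrow> eval (upd v x (h)) p \<le> eval (upd v x (h')) p"
proof (induct rule: disjunctive.induct)
  case (dimp aa p)
  have "eval (upd v x (h)) aa = eval v aa" "eval (upd v x (h')) aa = eval v aa" using dimp(1) by (simp_all add: eval_free)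
  then show ?case using dimp h_mono by (simp only: eval.simps) blast
next
  case (dorl b p) then show ?case by (simp add: eval_free le_supI2)
next
  case (dorr b p) then show ?case by (simp add: eval_free le_supI1)
next
  case (dor p q) then show ?case by (simp add: le_supI1 le_supI2)
qed simp

lemma disj_infl:
  fixes v :: "'v \<Rightarrow> 'a::heyting_algebra"
  shows "disjunctive x p \<Longrightarrow> h \<le> eval (upd v x (h)) p"
proof (induct rule: disjunctive.induct)
  case (dimp aa p) then show ?case using h_infl order_trans by (simp add: eval_free) blast
next
  case (dorl b p) then show ?case by (simp add: eval_free le_supI2)
next
  case (dorr b p) then show ?case by (simp add: eval_free le_supI1)
next
  case (dor p q) then show ?case by (simp add: le_supI1 le_supI2)
qed simp

lemma disj_meet:
  fixes v :: "'v \<Rightarrow> 'a::heyting_algebra"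
  shows "disjunctive x p \<Longrightarrow> inf d (eval (upd v x (h)) p) \<le> eval (upd v x (inf d h)) p"
proof (induct rule: disjunctive.induct)
  case (dimp aa p)
  let ?A = "eval v aa"
  have "inf (inf d (?A \<leadsto> eval (upd v x (h)) p)) ?A \<le> inf d (eval (upd v x (h)) p)"
    using h_mp[of ?A "eval (upd v x (h)) p"] by (simp add: le_infI1 le_infI2 inf_assoc)
  also have "\<dots> \<le> eval (upd v x (inf d h)) p" using dimp by simp
  finally have "inf d (?A \<leadsto> eval (upd v x (h)) p) \<le> ?A \<leadsto> eval (upd v x (inf d h)) p"
    using himp_residuation by blast
  moreover have "eval (upd v x (h)) aa = eval v aa" "eval (upd v x (inf d h)) aa = eval v aa" using dimp(1) by (simp_all add: eval_free)
  ultimately show ?case by (simp only: eval.simps)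
next
  case (dorl b p)
  have "inf d (sup (eval v b) (eval (upd v x (h)) p)) \<le> sup (inf d (eval v b)) (inf d (eval (upd v x (h)) p))"
    by (rule h_distrib)
  also have "\<dots> \<le> sup (eval v b) (eval (upd v x (inf d h)) p)"
    using dorl by (meson inf_le2 sup_mono)
  finally show ?case using dorl by (simp add: eval_free)
next
  case (dorr b p)
  have "inf d (sup (eval (upd v x (h)) p) (eval v b)) \<le> sup (inf d (eval (upd v x (h)) p)) (inf d (eval v b))"
    by (rule h_distrib)
  also have "\<dots> \<le> sup (eval (upd v x (inf d h)) p) (eval v b)"
    using dorr by (meson inf_le2 sup_mono)
  finally show ?case using dorr by (simp add: eval_free)
next
  case (dor p q)
  have "inf d (sup (eval (upd v x (h)) p) (eval (upd v x (h)) q)) \<le> sup (inf d (eval (upd v x (h)) p)) (inf d (eval (upd v x (h)) q))"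
    by (rule h_distrib)
  also have "\<dots> \<le> sup (eval (upd v x (inf d h)) p) (eval (upd v x (inf d h)) q)"
    using dor by (meson sup_mono)
  finally show ?case by simp
qed simp

lemma key:
  fixes v :: "'v \<Rightarrow> 'a::heyting_algebra"
  shows "disjunctive x p \<Longrightarrow>
    (\<forall>\<alpha>\<in>head x p. c \<le> eval v \<alpha> \<or> inf (inf c (eval v \<alpha>)) hh \<le> hl) \<Longrightarrow>
    eval (upd v x (hl)) p \<le> hh \<Longrightarrow> inf c (eval (upd v x (hh)) p) \<le> hh"
proof (induct rule: disjunctive.induct)
  case dvar then show ?case by simp
next
  case (dimp aa p)
  let ?A = "eval v aa"
  have ea: "eval (upd v x (hl)) aa = eval v aa" "eval (upd v x (hh)) aa = eval v aa" using dimp(1) by (simp_all add: eval_free)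
  have hl: "(?A \<leadsto> eval (upd v x (hl)) p) \<le> hh" using dimp(5) ea by (simp only: eval.simps)
  have pl: "eval (upd v x (hl)) p \<le> hh" using hl h_infl order_trans by blast
  have IH: "inf c (eval (upd v x (hh)) p) \<le> hh" using dimp pl by simp
  have "inf c (?A \<leadsto> eval (upd v x (hh)) p) \<le> hh"
  proof (cases "c \<le> ?A")
    case True
    have "inf c (?A \<leadsto> eval (upd v x (hh)) p) \<le> inf (?A \<leadsto> eval (upd v x (hh)) p) ?A"
      using True by (simp add: le_infI1 le_infI2 inf_commute)
    also have "\<dots> \<le> eval (upd v x (hh)) p" by (rule h_mp)
    finally have "inf c (?A \<leadsto> eval (upd v x (hh)) p) \<le> inf c (eval (upd v x (hh)) p)" by simp
    then show ?thesis using IH order_trans by blast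
  next
    case False
    then have c: "inf (inf c ?A) hh \<le> hl" using dimp by simp
    have "inf (inf c (?A \<leadsto> eval (upd v x (hh)) p)) ?A \<le> inf (inf c ?A) (eval (upd v x (hh)) p)"
    proof (rule le_infI)
      show "inf (inf c (?A \<leadsto> eval (upd v x (hh)) p)) ?A \<le> inf c ?A"
        by (simp add: le_infI1)
      have "inf (inf c (?A \<leadsto> eval (upd v x (hh)) p)) ?A \<le> inf (?A \<leadsto> eval (upd v x (hh)) p) ?A"
        by (simp add: le_infI1)
      then show "inf (inf c (?A \<leadsto> eval (upd v x (hh)) p)) ?A \<le> eval (upd v x (hh)) p"
        using h_mp[of ?A "eval (upd v x (hh)) p"] by (rule order_trans)
    qed
    also have "\<dots> \<le> eval (upd v x (inf (inf c ?A) hh)) p" by (rule disj_meet[OF dimp(2)])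
    also have "\<dots> \<le> eval (upd v x (hl)) p" by (rule disj_mono[OF dimp(2) c])
    finally have "inf c (?A \<leadsto> eval (upd v x (hh)) p) \<le> ?A \<leadsto> eval (upd v x (hl)) p"
      using himp_residuation by blast
    then show ?thesis using hl order_trans by blast
  qed
  then show ?case using ea by (simp only: eval.simps)
next
  case (dorl b p)
  have hb: "eval v b \<le> hh" and hp: "eval (upd v x (hl)) p \<le> hh" using dorl by (simp_all add: eval_free)
  have hd: "head x (Disj b p) = head x p" using dorl by simp
  have IH: "inf c (eval (upd v x (hh)) p) \<le> hh" using dorl hp hd by simp
  have "inf c (sup (eval v b) (eval (upd v x (hh)) p)) \<le> sup (inf c (eval v b)) (inf c (eval (upd v x (hh)) p))"
    by (rule h_distrib)
  also have "\<dots> \<le> hh" using IH hb by (simp add: le_infI2)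
  finally show ?case using dorl by (simp add: eval_free)
next
  case (dorr b p)
  have hb: "eval v b \<le> hh" and hp: "eval (upd v x (hl)) p \<le> hh" using dorr by (simp_all add: eval_free)
  have hd: "head x (Disj p b) = head x p" using disj_var[OF dorr(2)] dorr(1) by simp
  have IH: "inf c (eval (upd v x (hh)) p) \<le> hh" using dorr hp hd by simp
  have "inf c (sup (eval (upd v x (hh)) p) (eval v b)) \<le> sup (inf c (eval (upd v x (hh)) p)) (inf c (eval v b))"
    by (rule h_distrib)
  also have "\<dots> \<le> hh" using IH hb by (simp add: le_infI2)
  finally show ?case using dorr by (simp add: eval_free)
next
  case (dor p q)
  have hd: "head x (Disj p q) = head x p \<union> head x q" using disj_var[OF dor(1)] disj_var[OF dor(3)] by simp
  have IH1: "inf c (eval (upd v x (hh)) p) \<le> hh" using dor hd by simp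
  have IH2: "inf c (eval (upd v x (hh)) q) \<le> hh" using dor hd by simp
  have "inf c (sup (eval (upd v x (hh)) p) (eval (upd v x (hh)) q)) \<le> sup (inf c (eval (upd v x (hh)) p)) (inf c (eval (upd v x (hh)) q))"
    by (rule h_distrib)
  also have "\<dots> \<le> hh" using IH1 IH2 by simp
  finally show ?case by simp
qed

theorem mainTheorem20:
  fixes x :: 'v and \<phi> :: "'v form" and v :: "'v \<Rightarrow> 'a::heyting_algebra"
  assumes "disjunctive x \<phi>"
  shows "is_least_fixpoint (\<lambda>h. eval (v(x := h)) \<phi>)
           (((\<lambda>h. eval (v(x := h)) \<phi>) ^^ (card (head x \<phi>) + 1)) bot)"
proof -
  define F where "F = (\<lambda>h. eval (upd v x h) \<phi>)"
  define H where "H = head x \<phi>"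
  have Fmono: "F a \<le> F b" if "a \<le> b" for a b
    unfolding F_def by (rule disj_mono[OF assms that])
  have fin: "finite H" unfolding H_def by (rule head_finite)
  have C: "\<forall>S c. S \<subseteq> H \<longrightarrow> (\<forall>\<alpha>\<in>S. c \<le> eval v \<alpha>) \<longrightarrow> card (H - S) < k \<longrightarrow>
      inf c ((F ^^ Suc k) bot) \<le> (F ^^ k) bot" for k
  proof (induction k)
    case 0 then show ?case by simp
  next
    case (Suc k)
    show ?case
    proof (intro allI impI)
      fix S c
      assume S: "S \<subseteq> H" and cS: "\<forall>\<alpha>\<in>S. c \<le> eval v \<alpha>" and cd: "card (H - S) < Suc k"
      have cond: "\<forall>\<alpha>\<in>head x \<phi>. c \<le> eval v \<alpha> \<or>
          inf (inf c (eval v \<alpha>)) ((F ^^ Suc k) bot) \<le> (F ^^ k) bot"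
      proof
        fix \<alpha> assume a: "\<alpha> \<in> head x \<phi>"
        show "c \<le> eval v \<alpha> \<or> inf (inf c (eval v \<alpha>)) ((F ^^ Suc k) bot) \<le> (F ^^ k) bot"
        proof (cases "\<alpha> \<in> S")
          case True then show ?thesis using cS by blast
        next
          case False
          have "H - insert \<alpha> S = (H - S) - {\<alpha>}" by blast
          moreover have "\<alpha> \<in> H - S" using a False H_def by blast
          ultimately have "card (H - insert \<alpha> S) = card (H - S) - 1"
            using fin by simp
          moreover have "card (H - S) > 0" using \<open>\<alpha> \<in> H - S\<close> fin
            by (metis card_gt_0_iff empty_iff finite_Diff)
          ultimately have "card (H - insert \<alpha> S) < k" using cd by simp
          moreover have "insert \<alpha> S \<subseteq> H" using S a H_def by blast
          moreover have "\<forall>\<beta>\<in>insert \<alpha> S. inf c (eval v \<alpha>) \<le> eval v \<beta>"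
            using cS by (auto intro: le_infI1)
          ultimately show ?thesis using Suc.IH by blast
        qed
      qed
      have "inf c (F ((F ^^ Suc k) bot)) \<le> (F ^^ Suc k) bot"
        using key[OF assms cond] by (simp add: F_def)
      then show "inf c ((F ^^ Suc (Suc k)) bot) \<le> (F ^^ Suc k) bot" by simp
    qed
  qed
  let ?n = "card H"
  have "inf top ((F ^^ Suc (Suc ?n)) bot) \<le> (F ^^ Suc ?n) bot"
    using C[of "Suc ?n", rule_format, of "{}" top] by simp
  then have le: "F ((F ^^ Suc ?n) bot) \<le> (F ^^ Suc ?n) bot" by simp
  have ge: "(F ^^ Suc ?n) bot \<le> F ((F ^^ Suc ?n) bot)"
    unfolding F_def using disj_infl[OF assms] by blast
  have fix1: "F ((F ^^ Suc ?n) bot) = (F ^^ Suc ?n) bot" using le ge by simp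
  have least: "(F ^^ m) bot \<le> b" if "F b = b" for b m
  proof (induction m)
    case 0 then show ?case by simp
  next
    case (Suc m)
    have "F ((F ^^ m) bot) \<le> F b" using Fmono[OF Suc] .
    then show ?case using that by simp
  qed
  have "is_least_fixpoint F ((F ^^ Suc ?n) bot)"
    unfolding is_least_fixpoint_def using fix1 least by blast
  then show ?thesis by (simp add: F_def H_def upd_def)
qed

end
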